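(* Let $n\ge4$ and let $\mathcal D_n$ be a minimal DFA with state set $Q_n=\{0,\dots,n-1\}$, initial state $0$ and unique final state $n-1$, recognizing a two-sided ideal, with transition semigroup $T_n$. If every chain of states of $\mathcal D_n$ strictly ordered by $\prec$ has at most $3$ elements (i.e., a maximal-length such chain has length $3$), then $|T_n|\le n^{n-2}+(n-2)2^{n-2}+1$ and $T_n$ is a subsemigroup of $S_n$.
   Context: A two-sided ideal is a nonempty $L$ with $L=\Sigma^*L\Sigma^*$. For a state $q$, $K_q$ is the language accepted from $q$; $p\prec q$ means $K_p\subsetneq K_q$. The transition semigroup is the set of state transformations induced by nonempty words. Notation: $(p\to q)$ maps $p$ to $q$ and fixes other states; $(p_0,\dots,p_{k-1})$ is a cyclic permutation fixing other states. $S_n$ is the transition semigroup of the DFA with states $Q_n$, initial $0$, final $\{n-1\}$, alphabet $\{a,b,c,d,e,f\}$, with $a\colon(1,2,\dots,n-2)$, $b\colon(1,2)$, $c\colon(n-2\to1)$, $d\colon(n-2\to0)$, $e$ mapping each state of $\{0,\dots,n-2\}$ to $1$ and fixing $n-1$, and $f\colon(1\to n-1)$. *)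

theory Defs
  imports Main
begin

text \<open>A DFA with state set Q_n = {0..<n}, alphabet Sigma, transition function delta.
  Initial state 0, unique final state n-1.\<close>

fun dstar :: "(nat \<Rightarrow> 'a \<Rightarrow> nat) \<Rightarrow> nat \<Rightarrow> 'a list \<Rightarrow> nat" where
  "dstar \<delta> q [] = q"
| "dstar \<delta> q (x # w) = dstar \<delta> (\<delta> q x) w"

definition is_dfa :: "nat \<Rightarrow> 'a set \<Rightarrow> (nat \<Rightarrow> 'a \<Rightarrow> nat) \<Rightarrow> bool" where
  "is_dfa n \<Sigma> \<delta> \<longleftrightarrow> finite \<Sigma> \<and> 0 < n \<and> (\<forall>q<n. \<forall>x\<in>\<Sigma>. \<delta> q x < n)"

definition lang_from :: "nat \<Rightarrow> 'a set \<Rightarrow> (nat \<Rightarrow> 'a \<Rightarrow> nat) \<Rightarrow> nat \<Rightarrow> 'a list set" where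
  "lang_from n \<Sigma> \<delta> q = {w. set w \<subseteq> \<Sigma> \<and> dstar \<delta> q w = n - 1}"

definition minimal_dfa :: "nat \<Rightarrow> 'a set \<Rightarrow> (nat \<Rightarrow> 'a \<Rightarrow> nat) \<Rightarrow> bool" where
  "minimal_dfa n \<Sigma> \<delta> \<longleftrightarrow>
     (\<forall>q<n. \<exists>w. set w \<subseteq> \<Sigma> \<and> dstar \<delta> 0 w = q) \<and>
     (\<forall>p<n. \<forall>q<n. p \<noteq> q \<longrightarrow> lang_from n \<Sigma> \<delta> p \<noteq> lang_from n \<Sigma> \<delta> q)"

definition two_sided_ideal :: "'a set \<Rightarrow> 'a list set \<Rightarrow> bool" where
  "two_sided_ideal \<Sigma> L \<longleftrightarrow> L \<noteq> {} \<and>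
     L = {u @ v @ w | u v w. set u \<subseteq> \<Sigma> \<and> v \<in> L \<and> set w \<subseteq> \<Sigma>}"

definition state_prec :: "nat \<Rightarrow> 'a set \<Rightarrow> (nat \<Rightarrow> 'a \<Rightarrow> nat) \<Rightarrow> nat \<Rightarrow> nat \<Rightarrow> bool" where
  "state_prec n \<Sigma> \<delta> p q \<longleftrightarrow> lang_from n \<Sigma> \<delta> p \<subset> lang_from n \<Sigma> \<delta> q"

text \<open>Transformation of Q_n induced by a word (identity outside Q_n, as a normal form).\<close>
definition word_trans :: "nat \<Rightarrow> (nat \<Rightarrow> 'a \<Rightarrow> nat) \<Rightarrow> 'a list \<Rightarrow> nat \<Rightarrow> nat" where
  "word_trans n \<delta> w = (\<lambda>q. if q < n then dstar \<delta> q w else q)"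

definition trans_semigroup :: "nat \<Rightarrow> 'a set \<Rightarrow> (nat \<Rightarrow> 'a \<Rightarrow> nat) \<Rightarrow> (nat \<Rightarrow> nat) set" where
  "trans_semigroup n \<Sigma> \<delta> = {word_trans n \<delta> w | w. w \<noteq> [] \<and> set w \<subseteq> \<Sigma>}"

text \<open>The DFA defining S_n; letters a,b,c,d,e,f are encoded as 0,...,5.\<close>
definition delta_S :: "nat \<Rightarrow> nat \<Rightarrow> nat \<Rightarrow> nat" where
  "delta_S n q x =
    (if x = 0 then (if 1 \<le> q \<and> q < n - 2 then q + 1 else if q = n - 2 then 1 else q)
     else if x = 1 then (if q = 1 then 2 else if q = 2 then 1 else q)
     else if x = 2 then (if q = n - 2 then 1 else q)
     else if x = 3 then (if q = n - 2 then 0 else q)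
     else if x = 4 then (if q \<le> n - 2 then 1 else q)
     else (if q = 1 then n - 1 else q))"

definition S_sem :: "nat \<Rightarrow> (nat \<Rightarrow> nat) set" where
  "S_sem n = trans_semigroup n {0..<6} (delta_S n)"

end

theory Submission
  imports Defs "HOL-Library.FuncSet"
begin

lemma dstar_append: "dstar \<delta> q (u @ v) = dstar \<delta> (dstar \<delta> q u) v"
  by (induction u arbitrary: q) auto

lemma dstar_closed:
  assumes "\<forall>q<n. \<forall>x\<in>\<Sigma>. \<delta> q x < n" "set w \<subseteq> \<Sigma>" "q < n"
  shows "dstar \<delta> q w < n"
  using assms(2,3) by (induction w arbitrary: q) (use assms(1) in auto)

lemma word_trans_append:
  assumes "\<forall>q<n. \<forall>x\<in>\<Sigma>. \<delta> q x < n" "set u \<subseteq> \<Sigma>"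
  shows "word_trans n \<delta> (u @ v) = word_trans n \<delta> v \<circ> word_trans n \<delta> u"
proof
  fix q show "word_trans n \<delta> (u @ v) q = (word_trans n \<delta> v \<circ> word_trans n \<delta> u) q"
    using dstar_closed[OF assms] by (auto simp: word_trans_def dstar_append)
qed

lemma deltaS_closed: "4 \<le> n \<Longrightarrow> \<forall>q<n. \<forall>x\<in>{0..<6}. delta_S n q x < n"
  by (auto simp: delta_S_def)

lemma S_comp:
  assumes "4 \<le> n" "f \<in> S_sem n" "g \<in> S_sem n"
  shows "g \<circ> f \<in> S_sem n"
proof -
  obtain u where u: "f = word_trans n (delta_S n) u" "u \<noteq> []" "set u \<subseteq> {0..<6}"
    using assms(2) by (auto simp: S_sem_def trans_semigroup_def)
  obtain v where v: "g = word_trans n (delta_S n) v" "v \<noteq> []" "set v \<subseteq> {0..<6}"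
    using assms(3) by (auto simp: S_sem_def trans_semigroup_def)
  have "g \<circ> f = word_trans n (delta_S n) (u @ v)"
    using word_trans_append[OF deltaS_closed[OF assms(1)] u(3)] u v by simp
  moreover have "u @ v \<noteq> [] \<and> set (u @ v) \<subseteq> {0..<6}" using u v by auto
  ultimately show ?thesis unfolding S_sem_def trans_semigroup_def
    by (intro CollectI exI[of _ "u @ v"]) simp
qed

lemma S_word: "w \<noteq> [] \<Longrightarrow> set w \<subseteq> {0..<6} \<Longrightarrow> word_trans n (delta_S n) w \<in> S_sem n"
  by (auto simp: S_sem_def trans_semigroup_def)

definition sw :: "nat \<Rightarrow> nat \<Rightarrow> nat \<Rightarrow> nat" where
  "sw i j = (\<lambda>x. if x = i then j else if x = j then i else x)"

lemma S_id: "4 \<le> n \<Longrightarrow> id \<in> S_sem n"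
proof -
  assume n: "4 \<le> n"
  have "word_trans n (delta_S n) [1,1] = id"
    by (auto simp: word_trans_def delta_S_def)
  thus ?thesis using S_word[of "[1,1]" n] by simp
qed

lemma S_b: "4 \<le> n \<Longrightarrow> sw 1 2 \<in> S_sem n"
proof -
  assume n: "4 \<le> n"
  have "word_trans n (delta_S n) [1] = sw 1 2"
    using n by (auto simp: word_trans_def delta_S_def sw_def)
  thus ?thesis using S_word[of "[1]" n] by simp
qed

lemma S_c: "4 \<le> n \<Longrightarrow> id(n-2 := 1) \<in> S_sem n"
proof -
  assume n: "4 \<le> n"
  have "word_trans n (delta_S n) [2] = id(n-2 := 1)"
    using n by (auto simp: word_trans_def delta_S_def)
  thus ?thesis using S_word[of "[2]" n] by simp
qed

lemma S_d: "4 \<le> n \<Longrightarrow> id(n-2 := 0) \<in> S_sem n"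
proof -
  assume n: "4 \<le> n"
  have "word_trans n (delta_S n) [3] = id(n-2 := 0)"
    using n by (auto simp: word_trans_def delta_S_def)
  thus ?thesis using S_word[of "[3]" n] by simp
qed

lemma S_f: "4 \<le> n \<Longrightarrow> id(1 := n-1) \<in> S_sem n"
proof -
  assume n: "4 \<le> n"
  have "word_trans n (delta_S n) [5] = id(1 := n-1)"
    using n by (auto simp: word_trans_def delta_S_def)
  thus ?thesis using S_word[of "[5]" n] by simp
qed

lemma S_e: "4 \<le> n \<Longrightarrow> (\<lambda>q. if q \<le> n-2 then 1 else q) \<in> S_sem n"
proof -
  assume n: "4 \<le> n"
  have "word_trans n (delta_S n) [4] = (\<lambda>q. if q \<le> n-2 then 1 else q)"
  proof
    fix q show "word_trans n (delta_S n) [4] q = (if q \<le> n-2 then 1 else q)"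
      using n by (cases "q < n") (simp_all add: word_trans_def delta_S_def)
  qed
  thus ?thesis using S_word[of "[4]" n] by simp
qed

lemma S_top: "4 \<le> n \<Longrightarrow> (\<lambda>q. if q < n then n-1 else q) \<in> S_sem n"
proof -
  assume n: "4 \<le> n"
  have "word_trans n (delta_S n) [4,5] = (\<lambda>q. if q < n then n-1 else q)"
  proof
    fix q show "word_trans n (delta_S n) [4,5] q = (if q < n then n-1 else q)"
      using n by (cases "q < n") (auto simp add: word_trans_def delta_S_def)
  qed
  thus ?thesis using S_word[of "[4,5]" n] by simp
qed

definition rot :: "nat \<Rightarrow> nat \<Rightarrow> nat \<Rightarrow> nat" where
  "rot m k x = (if 1 \<le> x \<and> x \<le> m then (x - 1 + k) mod m + 1 else x)"

lemma rot_word: "4 \<le> n \<Longrightarrow> word_trans n (delta_S n) (replicate k 0) = rot (n-2) k"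
proof (induction k)
  case 0
  then show ?case by (auto simp: word_trans_def rot_def fun_eq_iff)
next
  case (Suc k)
  have "word_trans n (delta_S n) (replicate (Suc k) 0) = word_trans n (delta_S n) (replicate k 0 @ [0])"
    by (simp add: replicate_append_same)
  also have "\<dots> = word_trans n (delta_S n) [0] \<circ> rot (n-2) k"
    using word_trans_append[OF deltaS_closed[OF Suc.prems], of "replicate k 0" "[0]"] Suc
    by (simp add: subset_iff)
  also have "\<dots> = rot (n-2) (Suc k)"
  proof
    fix x
    show "(word_trans n (delta_S n) [0] \<circ> rot (n - 2) k) x = rot (n - 2) (Suc k) x"
    proof (cases "1 \<le> x \<and> x \<le> n - 2")
      case True
      define r where "r = (x - 1 + k) mod (n-2)"
      have r: "r < n - 2" using Suc.prems by (simp add: r_def)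
      have "(x - 1 + Suc k) mod (n-2) = Suc r mod (n-2)"
        unfolding r_def by (simp add: mod_Suc_eq)
      also have "\<dots> = (if r + 1 < n - 2 then r + 1 else 0)"
        using r by (cases "Suc r < n - 2") (auto simp: mod_Suc)
      finally have e1: "(x - 1 + Suc k) mod (n-2) = (if r + 1 < n - 2 then r + 1 else 0)" .
      have rotk: "rot (n-2) k x = r + 1" using True by (simp add: rot_def r_def)
      have rotSk: "rot (n-2) (Suc k) x = (if r + 1 < n - 2 then r + 2 else 1)"
        using True e1 by (simp add: rot_def)
      show ?thesis unfolding comp_def rotk rotSk
        using r Suc.prems by (auto simp: word_trans_def delta_S_def)
    next
      case False
      then show ?thesis using Suc.prems by (auto simp: rot_def word_trans_def delta_S_def)
    qed
  qed
  finally show ?case .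
qed

lemma mod_shift: "(r::nat) < m \<Longrightarrow> k < m \<Longrightarrow> (r + (m - k)) mod m = (if k \<le> r then r - k else r + m - k)"
proof (cases "k \<le> r")
  case True
  assume a: "r < m" "k < m"
  have "r + (m - k) = (r - k) + m" using True a by linarith
  then have "(r + (m - k)) mod m = (r - k) mod m" by simp
  then show ?thesis using True a by simp
next
  case False
  assume a: "r < m" "k < m"
  then show ?thesis using False by simp
qed

lemma S_adj:
  assumes n: "4 \<le> n" and k: "k + 2 \<le> n - 2"
  shows "sw (k+1) (k+2) \<in> S_sem n"
proof -
  define m where "m = n - 2"
  define w where "w = replicate (m-k) (0::nat) @ [1] @ replicate k 0"
  have cl: "\<forall>q<n. \<forall>x\<in>{0..<6}. delta_S n q x < n" using deltaS_closed[OF n] .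
  have "word_trans n (delta_S n) w = word_trans n (delta_S n) ([1] @ replicate k 0) \<circ> rot m (m-k)"
    unfolding w_def using word_trans_append[OF cl, of "replicate (m-k) 0" "[1] @ replicate k 0"]
      rot_word[OF n, of "m-k"] m_def by (simp add: subset_iff)
  also have "word_trans n (delta_S n) ([1] @ replicate k 0) = rot m k \<circ> sw 1 2"
  proof -
    have "word_trans n (delta_S n) [1] = sw 1 2"
      using n by (auto simp: word_trans_def delta_S_def sw_def)
    then show ?thesis using word_trans_append[OF cl, of "[1]" "replicate k 0"]
      rot_word[OF n, of "k"] m_def by simp
  qed
  also have "rot m k \<circ> sw 1 2 \<circ> rot m (m - k) = sw (k+1) (k+2)"
  proof
    fix x
    show "(rot m k \<circ> sw 1 2 \<circ> rot m (m - k)) x = sw (k + 1) (k + 2) x"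
    proof (cases "1 \<le> x \<and> x \<le> m")
      case False
      then have "rot m (m-k) x = x" "sw 1 2 x = x" "rot m k x = x" "sw (k+1) (k+2) x = x"
        using k m_def by (auto simp: rot_def sw_def)
      then show ?thesis by simp
    next
      case True
      define r where "r = x - 1"
      have r: "r < m" "x = r + 1" using True r_def by auto
      have km: "k < m" using k m_def by simp
      have y: "rot m (m-k) x = (if k \<le> r then r - k else r + m - k) + 1"
        using True mod_shift[OF r(1) km] r by (simp add: rot_def)
      have rk: "\<And>z. z < m \<Longrightarrow> rot m k (z + 1) = (z + k) mod m + 1"
        by (simp add: rot_def)
      show ?thesis
      proof (cases "k \<le> r")
        case kr: True
        show ?thesis
        proof (cases "r = k")
          case True
          then have "sw 1 2 (rot m (m-k) x) = 1 + 1" using y by (simp add: sw_def)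
          then show ?thesis using rk[of 1] True r k m_def by (simp add: sw_def)
        next
          case rk1: False
          show ?thesis
          proof (cases "r = k + 1")
            case True
            then have "sw 1 2 (rot m (m-k) x) = 0 + 1" using y by (simp add: sw_def)
            then show ?thesis using rk[of 0] True r km by (simp add: sw_def)
          next
            case False
            then have "sw 1 2 (rot m (m-k) x) = (r - k) + 1" using y kr rk1 by (simp add: sw_def)
            moreover have "rot m k ((r - k) + 1) = r + 1" using rk[of "r-k"] kr r by simp
            ultimately show ?thesis using r kr rk1 False by (simp add: sw_def)
          qed
        qed
      next
        case kr: False
        have ge2: "r + m - k \<ge> 2" using k m_def by linarith
        then have "sw 1 2 (rot m (m-k) x) = (r + m - k) + 1" using y kr by (simp add: sw_def)
        moreover have "rot m k ((r + m - k) + 1) = r + 1"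
        proof -
          have "(r + m - k + k) mod m = r" using r km by simp
          then show ?thesis using rk[of "r+m-k"] kr r km by simp
        qed
        ultimately show ?thesis using r kr by (simp add: sw_def)
      qed
    qed
  qed
  finally have "word_trans n (delta_S n) w = sw (k+1) (k+2)" by (simp add: comp_assoc)
  moreover have "w \<noteq> [] \<and> set w \<subseteq> {0..<6}" unfolding w_def by auto
  ultimately show ?thesis using S_word by metis
qed

lemma sw_conj: "i < j \<Longrightarrow> sw j (j+1) \<circ> sw i j \<circ> sw j (j+1) = sw i (j+1)"
  by (auto simp: fun_eq_iff sw_def)

lemma sw_sym: "sw i j = sw j i" by (auto simp: fun_eq_iff sw_def)
lemma sw_same: "sw i i = id" by (auto simp: fun_eq_iff sw_def)
lemma sw_inv: "sw i j \<circ> sw i j = id" by (auto simp: fun_eq_iff sw_def)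
lemma sw_inv': "sw i j (sw i j x) = x" by (auto simp: sw_def)

lemma conj_upd: "sw p q \<circ> id(a := b) \<circ> sw p q = id(sw p q a := sw p q b)"
  by (auto simp: fun_eq_iff sw_def)

lemma S_sw_lt:
  assumes n: "4 \<le> n" and i: "1 \<le> i" "i < j" "j \<le> n - 2"
  shows "sw i j \<in> S_sem n"
proof -
  have "\<forall>d. i + 1 + d \<le> n - 2 \<longrightarrow> sw i (i+1+d) \<in> S_sem n"
  proof
    fix d show "i + 1 + d \<le> n - 2 \<longrightarrow> sw i (i+1+d) \<in> S_sem n"
    proof (induction d)
      case 0
      show ?case using S_adj[OF n, of "i-1"] i by simp
    next
      case (Suc d)
      show ?case
      proof
        assume h: "i + 1 + Suc d \<le> n - 2"
        have a: "sw i (i+1+d) \<in> S_sem n" using Suc h by simp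
        have b: "sw (i+1+d) (i+1+d+1) \<in> S_sem n" using S_adj[OF n, of "i+d"] h by simp
        have "sw (i+1+d) (i+1+d+1) \<circ> sw i (i+1+d) \<circ> sw (i+1+d) (i+1+d+1) = sw i (i+1+d+1)"
          by (rule sw_conj) simp
        moreover have "sw (i+1+d) (i+1+d+1) \<circ> sw i (i+1+d) \<circ> sw (i+1+d) (i+1+d+1) \<in> S_sem n"
          using S_comp[OF n] a b by metis
        ultimately show "sw i (i + 1 + Suc d) \<in> S_sem n" by simp
      qed
    qed
  qed
  moreover have "j = i + 1 + (j - i - 1)" using i by simp
  ultimately show ?thesis using i by metis
qed

lemma S_sw:
  assumes n: "4 \<le> n" and "i \<in> {1..n-2}" "j \<in> {1..n-2}"
  shows "sw i j \<in> S_sem n"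
proof -
  consider "i < j" | "i = j" | "j < i" by linarith
  then show ?thesis
  proof cases
    case 1 then show ?thesis using S_sw_lt[OF n] assms by auto
  next
    case 2 then show ?thesis using S_id[OF n] by (simp add: sw_same)
  next
    case 3 then show ?thesis using S_sw_lt[OF n, of j i] assms by (auto simp: sw_sym)
  qed
qed

lemma S_conj_sw:
  assumes n: "4 \<le> n" and "p \<in> {1..n-2}" "q \<in> {1..n-2}" "id(a := b) \<in> S_sem n"
  shows "id(sw p q a := sw p q b) \<in> S_sem n"
proof -
  have "sw p q \<circ> id(a := b) \<circ> sw p q \<in> S_sem n"
    using S_comp[OF n] S_sw[OF n assms(2,3)] assms(4) by metis
  then show ?thesis by (simp add: conj_upd)
qed

lemma S_col:
  assumes n: "4 \<le> n" and ij: "i \<in> {1..n-2}" "j \<in> {1..n-2}" "i \<noteq> j"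
  shows "id(i := j) \<in> S_sem n"
proof -
  define m where "m = n - 2"
  have mM: "m \<in> {1..n-2}" "1 \<in> {1..n-2}" using n m_def by auto
  define j' where "j' = sw i m j"
  have j'M: "j' \<in> {1..n-2}" using ij mM unfolding j'_def sw_def by auto
  have j'm: "j' \<noteq> m" using ij unfolding j'_def sw_def by auto
  have "id(sw j' 1 m := sw j' 1 1) \<in> S_sem n"
    using S_conj_sw[OF n j'M mM(2)] S_c[OF n] m_def by simp
  moreover have "sw j' 1 m = m" "sw j' 1 1 = j'" using j'm n m_def by (auto simp: sw_def)
  ultimately have "id(m := j') \<in> S_sem n" by simp
  then have "id(sw i m m := sw i m j') \<in> S_sem n"
    using S_conj_sw[OF n ij(1) mM(1)] by blast
  moreover have "sw i m m = i" "sw i m j' = j" unfolding j'_def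
    by (auto simp: sw_def)
  ultimately show ?thesis by simp
qed

lemma S_col0:
  assumes n: "4 \<le> n" and y: "y \<in> {1..n-2}"
  shows "id(y := 0) \<in> S_sem n"
proof -
  have mM: "n - 2 \<in> {1..n-2}" using n by auto
  have "id(sw y (n-2) (n-2) := sw y (n-2) 0) \<in> S_sem n"
    using S_conj_sw[OF n y mM] S_d[OF n] by blast
  moreover have "sw y (n-2) (n-2) = y" "sw y (n-2) 0 = 0" using y by (auto simp: sw_def)
  ultimately show ?thesis by simp
qed

lemma S_colF:
  assumes n: "4 \<le> n" and y: "y \<in> {1..n-2}"
  shows "id(y := n-1) \<in> S_sem n"
proof -
  have mM: "1 \<in> {1..n-2}" using n by auto
  have "id(sw y 1 1 := sw y 1 (n-1)) \<in> S_sem n"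
    using S_conj_sw[OF n y mM] S_f[OF n] by blast
  moreover have "sw y 1 1 = y" "sw y 1 (n-1) = n-1" using y n by (auto simp: sw_def)
  ultimately show ?thesis by simp
qed

lemma S_perm:
  assumes n: "4 \<le> n"
  shows "inj_on t {1..n-2} \<Longrightarrow> t ` {1..n-2} = {1..n-2} \<Longrightarrow> (\<forall>x. x \<notin> {1..n-2} \<longrightarrow> t x = x)
    \<Longrightarrow> t \<in> S_sem n"
proof (induction "card {x\<in>{1..n-2}. t x \<noteq> x}" arbitrary: t rule: less_induct)
  case less
  let ?M = "{1..n-2::nat}"
  show ?case
  proof (cases "\<exists>i\<in>?M. t i \<noteq> i")
    case False
    then have "t = id" using less.prems(3) by (auto simp: fun_eq_iff)
    then show ?thesis using S_id[OF n] by simp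
  next
    case True
    then obtain i where i: "i \<in> ?M" "t i \<noteq> i" by blast
    define k where "k = t i"
    have kM: "k \<in> ?M" using i less.prems(2) k_def by blast
    define t' where "t' = sw i k \<circ> t"
    have t'i: "t' i = i" unfolding t'_def k_def by (simp add: sw_def)
    have sub: "{x\<in>?M. t' x \<noteq> x} \<subseteq> {x\<in>?M. t x \<noteq> x} - {i}"
    proof
      fix x assume x: "x \<in> {x\<in>?M. t' x \<noteq> x}"
      have "x \<noteq> i" using x t'i by auto
      moreover have "t x \<noteq> x"
      proof
        assume tx: "t x = x"
        have "x \<noteq> k"
        proof
          assume "x = k"
          then have "t k = t i" using tx k_def by simp
          then have "k = i" using less.prems(1) kM i(1) by (meson inj_onD)
          then show False using i k_def by simp
        qed
        then have "t' x = x" using tx \<open>x \<noteq> i\<close> unfolding t'_def by (simp add: sw_def)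
        then show False using x by simp
      qed
      ultimately show "x \<in> {x\<in>?M. t x \<noteq> x} - {i}" using x by simp
    qed
    have lt: "card {x\<in>?M. t' x \<noteq> x} < card {x\<in>?M. t x \<noteq> x}"
    proof -
      have "card {x\<in>?M. t' x \<noteq> x} \<le> card ({x\<in>?M. t x \<noteq> x} - {i})"
        by (rule card_mono[OF _ sub]) simp
      also have "\<dots> < card {x\<in>?M. t x \<noteq> x}"
        using i by (intro card_Diff1_less) auto
      finally show ?thesis .
    qed
    have inj: "inj_on t' ?M" unfolding t'_def
      using less.prems(1) by (intro comp_inj_on) (auto simp: inj_on_def sw_def)
    have img: "t' ` ?M = ?M"
    proof -
      have "sw i k ` ?M = ?M" using i kM by (auto simp: sw_def image_iff)
      then show ?thesis unfolding t'_def using less.prems(2) by (metis image_comp)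
    qed
    have out: "\<forall>x. x \<notin> ?M \<longrightarrow> t' x = x"
      using less.prems(3) i kM unfolding t'_def by (auto simp: sw_def)
    have "t' \<in> S_sem n" using less.hyps[OF lt inj img out] .
    moreover have "t = sw i k \<circ> t'" unfolding t'_def by (simp add: comp_assoc[symmetric] sw_inv)
    ultimately show ?thesis using S_comp[OF n] S_sw[OF n i(1) kM] by metis
  qed
qed

lemma defect_dec:
  assumes fin: "finite M" and i: "i \<in> M" and y: "y \<in> M - t ` M"
    and h: "t i \<notin> M \<or> (\<exists>j\<in>M. j \<noteq> i \<and> t j = t i)"
  shows "card (M - (t(i := y)) ` M) < card (M - t ` M)"
proof -
  have sub: "M - (t(i := y)) ` M \<subseteq> (M - t ` M) - {y}"
  proof
    fix z assume z: "z \<in> M - (t(i := y)) ` M"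
    have "z \<noteq> y" using z i by auto
    moreover have "z \<notin> t ` M"
    proof
      assume "z \<in> t ` M"
      then obtain x where x: "x \<in> M" "z = t x" by blast
      show False
      proof (cases "x = i")
        case False
        then have "z = (t(i := y)) x" using x by simp
        then show False using z x by auto
      next
        case True
        from h show False
        proof
          assume "t i \<notin> M" then show False using z x True by auto
        next
          assume "\<exists>j\<in>M. j \<noteq> i \<and> t j = t i"
          then obtain j where j: "j \<in> M" "j \<noteq> i" "t j = t i" by blast
          then have "z = (t(i := y)) j" using x True by simp
          moreover have "(t(i := y)) j \<in> (t(i := y)) ` M" using j(1) by (rule imageI)
          ultimately show False using z by simp
        qed
      qed
    qed
    ultimately show "z \<in> (M - t ` M) - {y}" using z by simp
  qed
  have "card (M - (t(i := y)) ` M) \<le> card ((M - t ` M) - {y})"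
    by (rule card_mono[OF _ sub]) (simp add: fin)
  also have "\<dots> < card (M - t ` M)" using y fin by (intro card_Diff1_less) auto
  finally show ?thesis .
qed

lemma S_W0:
  assumes n: "4 \<le> n"
  shows "t 0 = 0 \<Longrightarrow> (\<forall>q. n - 1 \<le> q \<longrightarrow> t q = q) \<Longrightarrow> (\<forall>q\<in>{1..n-2}. t q < n)
    \<Longrightarrow> t \<in> S_sem n"
proof (induction "card ({1..n-2} - t ` {1..n-2})" arbitrary: t rule: less_induct)
  case less
  let ?M = "{1..n-2::nat}"
  have outM: "\<And>x. x \<notin> ?M \<Longrightarrow> t x = x"
  proof -
    fix x assume "x \<notin> ?M"
    then have "x = 0 \<or> n - 1 \<le> x" by auto
    then show "t x = x" using less.prems by auto
  qed
  show ?case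
  proof (cases "?M - t ` ?M = {}")
    case True
    then have sub: "?M \<subseteq> t ` ?M" by blast
    have "card (t ` ?M) \<le> card ?M" by (rule card_image_le) simp
    moreover have "card ?M \<le> card (t ` ?M)" by (rule card_mono[OF _ sub]) simp
    ultimately have ceq: "card (t ` ?M) = card ?M" by simp
    have img: "t ` ?M = ?M" using card_subset_eq[OF _ sub] ceq by simp
    have inj: "inj_on t ?M" using eq_card_imp_inj_on[OF _ ceq] by simp
    show ?thesis using S_perm[OF n inj img] outM by blast
  next
    case False
    then obtain y where y: "y \<in> ?M - t ` ?M" by blast
    show ?thesis
    proof (cases "\<exists>i\<in>?M. t i \<notin> ?M")
      case True
      then obtain i where i: "i \<in> ?M" "t i \<notin> ?M" by blast
      define t' where "t' = t(i := y)"
      have lt: "card (?M - t' ` ?M) < card (?M - t ` ?M)"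
        unfolding t'_def using defect_dec[of ?M i y t] i y by simp
      have p1: "t' 0 = 0" "\<forall>q. n - 1 \<le> q \<longrightarrow> t' q = q" "\<forall>q\<in>?M. t' q < n"
        using less.prems i y n unfolding t'_def by auto
      have t'S: "t' \<in> S_sem n" using less.hyps[OF lt p1] .
      have "t i < n" using i less.prems(3) by blast
      then have ti: "t i = 0 \<or> t i = n - 1" using i by auto
      have colS: "id(y := t i) \<in> S_sem n" using ti S_col0[OF n] S_colF[OF n] y by auto
      have "t = id(y := t i) \<circ> t'"
      proof
        fix x show "t x = (id(y := t i) \<circ> t') x"
        proof (cases "x = i")
          case True then show ?thesis unfolding t'_def by simp
        next
          case False
          have "t x \<noteq> y"
          proof (cases "x \<in> ?M")
            case True then show ?thesis using y by auto
          next
            case False then show ?thesis using outM y by auto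
          qed
          then show ?thesis unfolding t'_def using False by simp
        qed
      qed
      then show ?thesis using S_comp[OF n t'S colS] by simp
    next
      case False
      then have tM: "t ` ?M \<subseteq> ?M" by auto
      have "t ` ?M \<noteq> ?M" using y by auto
      then have "t ` ?M \<subset> ?M" using tM by auto
      then have "card (t ` ?M) < card ?M" by (intro psubset_card_mono) auto
      then have "\<not> inj_on t ?M" using card_image by fastforce
      then obtain i j where ij: "i \<in> ?M" "j \<in> ?M" "i \<noteq> j" "t i = t j"
        unfolding inj_on_def by blast
      define t' where "t' = t(i := y)"
      have lt: "card (?M - t' ` ?M) < card (?M - t ` ?M)"
      proof -
        have "\<exists>j'\<in>?M. j' \<noteq> i \<and> t j' = t i" using ij by metis
        then show ?thesis unfolding t'_def using defect_dec[of ?M i y t] ij(1) y by blast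
      qed
      have p1: "t' 0 = 0" "\<forall>q. n - 1 \<le> q \<longrightarrow> t' q = q" "\<forall>q\<in>?M. t' q < n"
        using less.prems ij y n unfolding t'_def by auto
      have t'S: "t' \<in> S_sem n" using less.hyps[OF lt p1] .
      have colS: "id(i := j) \<in> S_sem n" using S_col[OF n ij(1,2,3)] .
      have "t = t' \<circ> id(i := j)"
        unfolding t'_def using ij by (auto simp: fun_eq_iff)
      then show ?thesis using S_comp[OF n colS t'S] by simp
    qed
  qed
qed



definition Wall :: "nat \<Rightarrow> (nat \<Rightarrow> nat) set" where
  "Wall n = {t. (\<forall>q. n - 1 \<le> q \<longrightarrow> t q = q) \<and> (\<forall>q\<in>{1..n-2}. t q < n) \<and>
     (t 0 = 0 \<or> (t 0 = n - 1 \<and> (\<forall>q\<in>{1..n-2}. t q = n - 1)) \<or>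
      (t 0 \<in> {1..n-2} \<and> (\<forall>q\<in>{1..n-2}. t q = t 0 \<or> t q = n - 1)))}"

lemma S_Wall:
  assumes n: "4 \<le> n" and t: "t \<in> Wall n"
  shows "t \<in> S_sem n"
proof -
  let ?M = "{1..n-2::nat}"
  have fix1: "\<forall>q. n - 1 \<le> q \<longrightarrow> t q = q" and lt: "\<forall>q\<in>?M. t q < n"
    using t by (auto simp: Wall_def)
  consider "t 0 = 0" | "t 0 = n - 1" "\<forall>q\<in>?M. t q = n - 1"
    | "t 0 \<in> ?M" "\<forall>q\<in>?M. t q = t 0 \<or> t q = n - 1"
    using t unfolding Wall_def mem_Collect_eq by (elim conjE disjE) (simp_all only:)
  then show ?thesis
  proof cases
    case 1 then show ?thesis using S_W0[OF n] fix1 lt by blast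
  next
    case 2
    have "t = (\<lambda>q. if q < n then n-1 else q)"
    proof
      fix q show "t q = (if q < n then n-1 else q)"
      proof -
        consider "q = 0" | "q \<in> ?M" | "n - 1 \<le> q" by force
        then show ?thesis
        proof cases
          case 3 then show ?thesis using fix1 by auto
        qed (use 2 n in auto)
      qed
    qed
    then show ?thesis using S_top[OF n] by simp
  next
    case 3
    define r where "r = t 0"
    define s where "s = (\<lambda>x. if x \<in> ?M \<and> t x = n - 1 then n - 1 else x)"
    define e where "e = (\<lambda>q::nat. if q \<le> n-2 then 1 else q)"
    have s1: "\<forall>q. n - 1 \<le> q \<longrightarrow> s q = q" unfolding s_def by auto
    have s2: "\<forall>q\<in>?M. s q < n" unfolding s_def using n by auto
    have s0: "s 0 = 0" unfolding s_def by simp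
    have sS: "s \<in> S_sem n" using S_W0[OF n s0 s1 s2] .
    have eS: "e \<in> S_sem n" using S_e[OF n] unfolding e_def .
    have rM: "r \<in> ?M" using 3 r_def by simp
    have swS: "sw 1 r \<in> S_sem n" using S_sw[OF n _ rM] n by auto
    have "t = sw 1 r \<circ> e \<circ> s"
    proof
      fix q show "t q = (sw 1 r \<circ> e \<circ> s) q"
      proof -
        consider "q = 0" | "q \<in> ?M" | "n - 1 \<le> q" by force
        then show ?thesis
        proof cases
          case 1 then show ?thesis using r_def rM by (simp add: s_def e_def sw_def)
        next
          case 2
          then have "t q = r \<or> t q = n - 1" using 3 r_def by auto
          then show ?thesis using 2 rM n by (auto simp: s_def e_def sw_def)
        next
          case c: 3 then show ?thesis using fix1 rM n by (auto simp: s_def e_def sw_def)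
        qed
      qed
    qed
    then show ?thesis using S_comp[OF n sS S_comp[OF n eS swS]] by (simp add: comp_assoc)
  qed
qed

lemma restrict_inj:
  "inj_on (\<lambda>t. restrict t {1..n-2}) {t \<in> Wall n. t 0 = c}"
proof (rule inj_onI)
  fix t s assume t: "t \<in> {t \<in> Wall n. t 0 = c}" and s: "s \<in> {t \<in> Wall n. t 0 = c}"
    and eq: "restrict t {1..n-2} = restrict s {1..n-2}"
  show "t = s"
  proof
    fix q
    consider "q = 0" | "q \<in> {1..n-2}" | "n - 1 \<le> q" by force
    then show "t q = s q"
    proof cases
      case 1 then show ?thesis using t s by simp
    next
      case 2 then show ?thesis using eq by (metis restrict_apply')
    next
      case 3 then show ?thesis using t s by (simp add: Wall_def)
    qed
  qed
qed

lemma card_part: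
  assumes "\<And>t. t \<in> {t \<in> Wall n. t 0 = c} \<Longrightarrow> \<forall>q\<in>{1..n-2}. t q \<in> B"
    and "finite B"
  shows "finite {t \<in> Wall n. t 0 = c} \<and> card {t \<in> Wall n. t 0 = c} \<le> card B ^ (n - 2)"
proof -
  let ?A = "{t \<in> Wall n. t 0 = c}"
  let ?P = "PiE {1..n-2} (\<lambda>_. B)"
  have sub: "(\<lambda>t. restrict t {1..n-2}) ` ?A \<subseteq> ?P" using assms(1) by auto
  have finP: "finite ?P" using assms(2) by (simp add: finite_PiE)
  have fin: "finite ?A"
    using finite_imageD[OF finite_subset[OF sub finP] restrict_inj] .
  have "card ?A \<le> card ?P" by (rule card_inj_on_le[OF restrict_inj sub finP])
  also have "card ?P = card B ^ (n - 2)" by (simp add: card_PiE)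
  finally show ?thesis using fin by simp
qed

lemma Wall_lt: "t \<in> Wall n \<Longrightarrow> q \<in> {1..n-2} \<Longrightarrow> t q < n"
  unfolding Wall_def by blast

lemma Wall_0: "t \<in> Wall n \<Longrightarrow> t 0 = 0 \<or> t 0 = n - 1 \<or> t 0 \<in> {1..n-2}"
  unfolding Wall_def by blast

lemma card_Wall:
  assumes n: "4 \<le> n"
  shows "finite (Wall n) \<and> card (Wall n) \<le> n ^ (n - 2) + (n - 2) * 2 ^ (n - 2) + 1"
proof -
  let ?M = "{1..n-2::nat}"
  let ?A = "\<lambda>c. {t \<in> Wall n. t 0 = c}"
  have cover: "Wall n \<subseteq> (?A 0 \<union> ?A (n - 1)) \<union> (\<Union>r\<in>?M. ?A r)"
  proof
    fix t assume t: "t \<in> Wall n"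
    show "t \<in> (?A 0 \<union> ?A (n - 1)) \<union> (\<Union>r\<in>?M. ?A r)"
      using Wall_0[OF t] t by blast
  qed
  have A0: "finite (?A 0) \<and> card (?A 0) \<le> n ^ (n - 2)"
  proof -
    have "\<And>t. t \<in> ?A 0 \<Longrightarrow> \<forall>q\<in>?M. t q \<in> {0..<n}" using Wall_lt by auto
    then show ?thesis using card_part[of n 0 "{0..<n}"] by simp
  qed
  have Atop: "finite (?A (n-1)) \<and> card (?A (n-1)) \<le> 1"
  proof -
    have "\<And>t. t \<in> ?A (n-1) \<Longrightarrow> \<forall>q\<in>?M. t q \<in> {0..<n}" using Wall_lt by auto
    then have fin: "finite (?A (n-1))" using card_part[of n "n-1" "{0..<n}"] by simp
    have "?A (n-1) \<subseteq> {\<lambda>q. if q < n then n - 1 else q}"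
    proof
      fix t assume t: "t \<in> ?A (n-1)"
      have tM: "\<forall>q\<in>?M. t q = n - 1"
      proof -
        have "t 0 = n - 1" using t by simp
        moreover have "n - 1 \<notin> ?M" "n - 1 \<noteq> 0" using n by auto
        ultimately show ?thesis using t unfolding Wall_def by auto
      qed
      have tF: "\<forall>q. n - 1 \<le> q \<longrightarrow> t q = q" using t unfolding Wall_def by blast
      have "t = (\<lambda>q. if q < n then n - 1 else q)"
      proof
        fix q
        consider "q = 0" | "q \<in> ?M" | "n - 1 \<le> q" by force
        then show "t q = (if q < n then n - 1 else q)"
        proof cases
          case 1 then show ?thesis using t n by simp
        next
          case 2 then show ?thesis using tM by auto
        next
          case 3 then show ?thesis using tF by auto
        qed
      qed
      then show "t \<in> {\<lambda>q. if q < n then n - 1 else q}" by simp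
    qed
    then have "card (?A (n-1)) \<le> card {\<lambda>q. if q < n then n - 1 else (q::nat)}"
      by (intro card_mono) auto
    then show ?thesis using fin by simp
  qed
  have Ar: "\<And>r. r \<in> ?M \<Longrightarrow> finite (?A r) \<and> card (?A r) \<le> 2 ^ (n - 2)"
  proof -
    fix r assume r: "r \<in> ?M"
    have "r \<noteq> n - 1" using r n by auto
    then have c2: "card {r, n - 1} = 2" by simp
    have rn: "r \<noteq> 0" "r \<noteq> n - 1" using r n by auto
    have "\<And>t. t \<in> ?A r \<Longrightarrow> \<forall>q\<in>?M. t q \<in> {r, n-1}"
    proof -
      fix t assume t: "t \<in> ?A r"
      then have "t 0 = r" "t \<in> Wall n" by auto
      then show "\<forall>q\<in>?M. t q \<in> {r, n-1}" using rn unfolding Wall_def by auto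
    qed
    then have "finite (?A r) \<and> card (?A r) \<le> card {r, n-1} ^ (n - 2)"
      using card_part[of n r "{r, n-1}"] by blast
    then show "finite (?A r) \<and> card (?A r) \<le> 2 ^ (n - 2)" using c2 by simp
  qed
  have finU: "finite (\<Union>r\<in>?M. ?A r)" using Ar by auto
  have "card (\<Union>r\<in>?M. ?A r) \<le> (\<Sum>r\<in>?M. card (?A r))" by (rule card_UN_le) simp
  also have "\<dots> \<le> (\<Sum>r\<in>?M. 2 ^ (n - 2))" using Ar by (intro sum_mono) auto
  also have "\<dots> = (n - 2) * 2 ^ (n - 2)" by simp
  finally have cU: "card (\<Union>r\<in>?M. ?A r) \<le> (n - 2) * 2 ^ (n - 2)" .
  have finB: "finite ((?A 0 \<union> ?A (n - 1)) \<union> (\<Union>r\<in>?M. ?A r))" using A0 Atop finU by simp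
  have fin: "finite (Wall n)" using finite_subset[OF cover finB] .
  have "card (Wall n) \<le> card ((?A 0 \<union> ?A (n - 1)) \<union> (\<Union>r\<in>?M. ?A r))"
    using card_mono[OF finB cover] .
  also have "\<dots> \<le> card (?A 0 \<union> ?A (n - 1)) + card (\<Union>r\<in>?M. ?A r)"
    by (rule card_Un_le)
  also have "\<dots> \<le> card (?A 0) + card (?A (n - 1)) + card (\<Union>r\<in>?M. ?A r)"
    using card_Un_le by simp
  finally show ?thesis using fin A0 Atop cU by linarith
qed

lemma K_shift:
  assumes "set w \<subseteq> \<Sigma>"
  shows "lang_from n \<Sigma> \<delta> (dstar \<delta> q w) = {v. set v \<subseteq> \<Sigma> \<and> w @ v \<in> lang_from n \<Sigma> \<delta> q}"
  using assms by (auto simp: lang_from_def dstar_append)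

lemma K_mono:
  assumes "lang_from n \<Sigma> \<delta> p \<subseteq> lang_from n \<Sigma> \<delta> q" "set w \<subseteq> \<Sigma>"
  shows "lang_from n \<Sigma> \<delta> (dstar \<delta> p w) \<subseteq> lang_from n \<Sigma> \<delta> (dstar \<delta> q w)"
  using assms unfolding K_shift[OF assms(2)] by auto

theorem lemma7:
  fixes n :: nat and \<Sigma> :: "'a set" and \<delta> :: "nat \<Rightarrow> 'a \<Rightarrow> nat"
  assumes "n \<ge> 4"
    and "is_dfa n \<Sigma> \<delta>"
    and "minimal_dfa n \<Sigma> \<delta>"
    and "two_sided_ideal \<Sigma> (lang_from n \<Sigma> \<delta> 0)"
    and "\<forall>xs. set xs \<subseteq> {0..<n} \<and> sorted_wrt (state_prec n \<Sigma> \<delta>) xs \<longrightarrow> length xs \<le> 3"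
  shows "card (trans_semigroup n \<Sigma> \<delta>) \<le> n ^ (n - 2) + (n - 2) * 2 ^ (n - 2) + 1
         \<and> trans_semigroup n \<Sigma> \<delta> \<subseteq> S_sem n"
proof -
  note n = assms(1)
  let ?K = "lang_from n \<Sigma> \<delta>"
  let ?M = "{1..n-2::nat}"
  have cl: "\<forall>q<n. \<forall>x\<in>\<Sigma>. \<delta> q x < n" using assms(2) by (simp add: is_dfa_def)
  have reach: "\<And>q. q < n \<Longrightarrow> \<exists>u. set u \<subseteq> \<Sigma> \<and> dstar \<delta> 0 u = q"
    using assms(3) by (simp add: minimal_dfa_def)
  have dist: "\<And>p q. p < n \<Longrightarrow> q < n \<Longrightarrow> ?K p = ?K q \<Longrightarrow> p = q"
    using assms(3) unfolding minimal_dfa_def by blast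
  have ideal: "\<And>u v w. v \<in> ?K 0 \<Longrightarrow> set u \<subseteq> \<Sigma> \<Longrightarrow> set w \<subseteq> \<Sigma> \<Longrightarrow> u @ v @ w \<in> ?K 0"
  proof -
    fix u v w assume h: "v \<in> ?K 0" "set u \<subseteq> \<Sigma>" "set w \<subseteq> \<Sigma>"
    have eq: "?K 0 = {u @ v @ w | u v w. set u \<subseteq> \<Sigma> \<and> v \<in> ?K 0 \<and> set w \<subseteq> \<Sigma>}"
      using assms(4) unfolding two_sided_ideal_def by blast
    have "u @ v @ w \<in> {u @ v @ w | u v w. set u \<subseteq> \<Sigma> \<and> v \<in> ?K 0 \<and> set w \<subseteq> \<Sigma>}"
      using h by blast
    then show "u @ v @ w \<in> ?K 0" using eq by simp
  qed
  have K0: "\<And>q. q < n \<Longrightarrow> ?K 0 \<subseteq> ?K q"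
  proof
    fix q v assume q: "q < n" and v: "v \<in> ?K 0"
    obtain u where u: "set u \<subseteq> \<Sigma>" "dstar \<delta> 0 u = q" using reach[OF q] by blast
    have "u @ v @ [] \<in> ?K 0" using ideal[OF v u(1), of "[]"] by simp
    then show "v \<in> ?K q" using u v by (auto simp: lang_from_def dstar_append)
  qed
  have Ktop: "?K (n - 1) = {v. set v \<subseteq> \<Sigma>}"
  proof
    show "?K (n - 1) \<subseteq> {v. set v \<subseteq> \<Sigma>}" by (auto simp: lang_from_def)
  next
    show "{v. set v \<subseteq> \<Sigma>} \<subseteq> ?K (n - 1)"
    proof
      fix v assume v: "v \<in> {v. set v \<subseteq> \<Sigma>}"
      obtain u where u: "set u \<subseteq> \<Sigma>" "dstar \<delta> 0 u = n - 1" using reach[of "n-1"] n by auto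
      have "u \<in> ?K 0" using u by (simp add: lang_from_def)
      then have "[] @ u @ v \<in> ?K 0" using ideal[of u "[]" v] v by simp
      then show "v \<in> ?K (n - 1)" using u v by (auto simp: lang_from_def dstar_append)
    qed
  qed
  have Kle: "\<And>q. ?K q \<subseteq> ?K (n - 1)" using Ktop by (auto simp: lang_from_def)
  have incomp: "\<And>p q. p \<in> ?M \<Longrightarrow> q \<in> ?M \<Longrightarrow> p \<noteq> q \<Longrightarrow> \<not> ?K p \<subseteq> ?K q"
  proof
    fix p q assume p: "p \<in> ?M" and q: "q \<in> ?M" and pq: "p \<noteq> q" and sub: "?K p \<subseteq> ?K q"
    have pn: "p < n" "q < n" "n - 1 < n" "0 < n" using p q n by auto
    have lt: "\<And>a b. a < n \<Longrightarrow> b < n \<Longrightarrow> a \<noteq> b \<Longrightarrow> ?K a \<subseteq> ?K b \<Longrightarrow> state_prec n \<Sigma> \<delta> a b"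
      unfolding state_prec_def using dist by blast
    have ne: "0 \<noteq> p" "0 \<noteq> q" "p \<noteq> n - 1" "q \<noteq> n - 1" "0 \<noteq> n - 1" using p q n by auto
    have "sorted_wrt (state_prec n \<Sigma> \<delta>) [0, p, q, n - 1]"
      using lt[OF pn(4) pn(1) ne(1) K0[OF pn(1)]] lt[OF pn(4) pn(2) ne(2) K0[OF pn(2)]]
        lt[OF pn(4) pn(3) ne(5) K0[OF pn(3)]] lt[OF pn(1) pn(2) pq sub]
        lt[OF pn(1) pn(3) ne(3) Kle] lt[OF pn(2) pn(3) ne(4) Kle]
      by simp
    moreover have "set [0, p, q, n - 1] \<subseteq> {0..<n}" using pn by auto
    ultimately show False using assms(5) by fastforce
  qed
  have TW: "trans_semigroup n \<Sigma> \<delta> \<subseteq> Wall n"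
  proof
    fix t assume "t \<in> trans_semigroup n \<Sigma> \<delta>"
    then obtain w where w: "t = word_trans n \<delta> w" "set w \<subseteq> \<Sigma>"
      unfolding trans_semigroup_def by blast
    have tq: "\<And>q. q < n \<Longrightarrow> t q = dstar \<delta> q w" using w by (simp add: word_trans_def)
    have tlt: "\<And>q. q < n \<Longrightarrow> t q < n" using tq dstar_closed[OF cl w(2)] by simp
    have tK: "\<And>p q. p < n \<Longrightarrow> q < n \<Longrightarrow> ?K p \<subseteq> ?K q \<Longrightarrow> ?K (t p) \<subseteq> ?K (t q)"
      using tq K_mono[OF _ w(2)] by simp
    have tF: "\<forall>q. n - 1 \<le> q \<longrightarrow> t q = q"
    proof (intro allI impI)
      fix q assume q: "n - 1 \<le> q"
      show "t q = q"
      proof (cases "q < n")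
        case True
        then have "q = n - 1" using q by simp
        moreover have "w \<in> ?K (n - 1)" using Ktop w by simp
        ultimately show ?thesis using tq True by (simp add: lang_from_def)
      next
        case False then show ?thesis using w by (simp add: word_trans_def)
      qed
    qed
    have tM: "\<forall>q\<in>?M. t q < n" using tlt n by auto
    have z: "t 0 < n" using tlt n by simp
    have "t 0 = 0 \<or> (t 0 = n - 1 \<and> (\<forall>q\<in>?M. t q = n - 1)) \<or>
      (t 0 \<in> ?M \<and> (\<forall>q\<in>?M. t q = t 0 \<or> t q = n - 1))"
    proof -
      consider "t 0 = 0" | "t 0 = n - 1" | "t 0 \<in> ?M" using z by force
      then show ?thesis
      proof cases
        case 1 then show ?thesis by simp
      next
        case 2
        have "\<forall>q\<in>?M. t q = n - 1"
        proof
          fix q assume q: "q \<in> ?M"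
          have "?K (t 0) \<subseteq> ?K (t q)" 
          proof -
            have qn: "q < n" using q n by auto
            show ?thesis using tK[of 0 q, OF _ qn K0[OF qn]] n by simp
          qed
          then have "?K (t q) = ?K (n - 1)" using 2 Kle by (metis subset_antisym)
          then show "t q = n - 1" using dist tlt q n by auto
        qed
        then show ?thesis using 2 by simp
      next
        case 3
        have "\<forall>q\<in>?M. t q = t 0 \<or> t q = n - 1"
        proof
          fix q assume q: "q \<in> ?M"
          have sub: "?K (t 0) \<subseteq> ?K (t q)" 
          proof -
            have qn: "q < n" using q n by auto
            show ?thesis using tK[of 0 q, OF _ qn K0[OF qn]] n by simp
          qed
          have tqn: "t q < n" using tlt q n by auto
          show "t q = t 0 \<or> t q = n - 1"
          proof (rule ccontr)
            assume c: "\<not> (t q = t 0 \<or> t q = n - 1)"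
            show False
            proof (cases "t q = 0")
              case True
              then have "?K (t 0) = ?K 0" using sub K0[OF z] by auto
              then have "t 0 = 0" using dist z n by auto
              then show False using 3 by simp
            next
              case False
              then have "t q \<in> ?M" using tqn c by auto
              moreover have "t q \<noteq> t 0" using c by auto
              ultimately show False using incomp[of "t 0" "t q"] 3 sub by auto
            qed
          qed
        qed
        then show ?thesis using 3 by simp
      qed
    qed
    then show "t \<in> Wall n" unfolding Wall_def using tF tM by blast
  qed
  have cW: "finite (Wall n) \<and> card (Wall n) \<le> n ^ (n - 2) + (n - 2) * 2 ^ (n - 2) + 1"
    using card_Wall[OF n] .
  have "card (trans_semigroup n \<Sigma> \<delta>) \<le> card (Wall n)"
    using card_mono[OF _ TW] cW by blast
  moreover have "trans_semigroup n \<Sigma> \<delta> \<subseteq> S_sem n" using TW S_Wall[OF n] by blast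
  ultimately show ?thesis using cW by linarith
qed

end
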